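(* Let $V_1, V_2$ be disjoint finite sets of nails. Let $h_1 \in F(V_1)$ solve a specification $f_1$ on $V_1$, and $h_2 \in F(V_2)$ solve a specification $f_2$ on $V_2$. Regard $f_1, f_2$ as functions on subsets $S \subseteq V_1 \cup V_2$ via $S \mapsto f_i(S \cap V_i)$. Then, as words in $F(V_1 \cup V_2)$, $h_1 + h_2$ solves $f_1 \wedge f_2$, and the commutator $[h_1, h_2] = h_1 + h_2 - h_1 - h_2$ solves $f_1 \vee f_2$.
   Context: Words are elements of the free group $F(V)$ on a finite set $V$ of nails, written additively ($+$ group operation, $-$ inverse, $0$ identity). For $S \subseteq V$, $h|_S$ is the image of $h$ under the homomorphism killing the generators in $S$ ("removing the nails in $S$"). A specification on $V$ is a monotone function $f: 2^V \to \{\mathsf{hang}, \mathsf{fall}\}$ with $f(V) = \mathsf{fall}$, where $\mathsf{hang} < \mathsf{fall}$ and monotone means $S \subseteq S' \Rightarrow f(S) \le f(S')$. A word $h$ on $V$ solves $f$ if for every $S \subseteq V$: $h|_S = 0 \iff f(S) = \mathsf{fall}$. The operations $\vee$ and $\wedge$ on specifications are pointwise $\max$ and $\min$ with respect to $\mathsf{hang} < \mathsf{fall}$. *)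

theory Defs
  imports Main
begin

text \<open>A word over nails of type 'a is a list of letters (x, b): the generator x
  (b = True) or its inverse -x (b = False). Words represent elements of the free
  group F(V); two words denote the same element iff their free reductions agree.\<close>

type_synonym 'a word = "('a \<times> bool) list"

fun reduce :: "'a word \<Rightarrow> 'a word" where
  "reduce [] = []"
| "reduce (x # xs) =
     (case reduce xs of
        [] \<Rightarrow> [x]
      | y # ys \<Rightarrow> (if fst x = fst y \<and> snd x \<noteq> snd y then ys else x # y # ys))"

definition word_on :: "'a set \<Rightarrow> 'a word \<Rightarrow> bool" where
  "word_on V h \<longleftrightarrow> fst ` set h \<subseteq> V"

definition wplus :: "'a word \<Rightarrow> 'a word \<Rightarrow> 'a word" where
  "wplus h g = h @ g"

definition wneg :: "'a word \<Rightarrow> 'a word" where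
  "wneg h = rev (map (\<lambda>(x, b). (x, \<not> b)) h)"

definition is_zero :: "'a word \<Rightarrow> bool" where
  "is_zero h \<longleftrightarrow> reduce h = []"

definition commutator :: "'a word \<Rightarrow> 'a word \<Rightarrow> 'a word" where
  "commutator h g = wplus (wplus (wplus h g) (wneg h)) (wneg g)"

definition remove_nails :: "'a set \<Rightarrow> 'a word \<Rightarrow> 'a word" where
  "remove_nails S h = filter (\<lambda>(x, b). x \<notin> S) h"

datatype outcome = Hang | Fall

definition outcome_le :: "outcome \<Rightarrow> outcome \<Rightarrow> bool" where
  "outcome_le a b \<longleftrightarrow> a = Hang \<or> b = Fall"

definition is_spec :: "'a set \<Rightarrow> ('a set \<Rightarrow> outcome) \<Rightarrow> bool" where
  "is_spec V f \<longleftrightarrow>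
     (\<forall>S S'. S \<subseteq> S' \<and> S' \<subseteq> V \<longrightarrow> outcome_le (f S) (f S')) \<and> f V = Fall"

definition solves :: "'a set \<Rightarrow> 'a word \<Rightarrow> ('a set \<Rightarrow> outcome) \<Rightarrow> bool" where
  "solves V h f \<longleftrightarrow>
     (\<forall>S. S \<subseteq> V \<longrightarrow> (is_zero (remove_nails S h) \<longleftrightarrow> f S = Fall))"

definition spec_join :: "('a set \<Rightarrow> outcome) \<Rightarrow> ('a set \<Rightarrow> outcome) \<Rightarrow> 'a set \<Rightarrow> outcome" where
  "spec_join f g S = (if f S = Fall \<or> g S = Fall then Fall else Hang)"

definition spec_meet :: "('a set \<Rightarrow> outcome) \<Rightarrow> ('a set \<Rightarrow> outcome) \<Rightarrow> 'a set \<Rightarrow> outcome" where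
  "spec_meet f g S = (if f S = Fall \<and> g S = Fall then Fall else Hang)"

definition spec_extend :: "'a set \<Rightarrow> ('a set \<Rightarrow> outcome) \<Rightarrow> 'a set \<Rightarrow> outcome" where
  "spec_extend W f S = f (S \<inter> W)"

end

theory Submission
  imports Defs
begin

fun cancel :: "('a \<times> bool) \<Rightarrow> 'a word \<Rightarrow> 'a word" where
  "cancel x [] = [x]"
| "cancel x (y # ys) = (if fst x = fst y \<and> snd x \<noteq> snd y then ys else x # y # ys)"

fun red :: "'a word \<Rightarrow> bool" where
  "red [] = True"
| "red [x] = True"
| "red (x # y # ys) = (\<not> (fst x = fst y \<and> snd x \<noteq> snd y) \<and> red (y # ys))"

definition flip :: "'a \<times> bool \<Rightarrow> 'a \<times> bool" where
  "flip x = (fst x, \<not> snd x)"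

abbreviation F :: "'a word \<Rightarrow> 'a word \<Rightarrow> 'a word" where
  "F xs z \<equiv> foldr cancel xs z"

lemma reduce_cons: "reduce (x # xs) = cancel x (reduce xs)"
  by (cases "reduce xs") auto

lemma reduce_F: "reduce xs = F xs []"
  by (induction xs) (simp_all add: reduce_cons del: reduce.simps(2))

lemma reduce_append: "reduce (xs @ ys) = F xs (reduce ys)"
  by (simp add: reduce_F)

lemma red_tl: "red (y # ys) \<Longrightarrow> red ys"
  by (cases ys) auto

lemma red_cancel: "red z \<Longrightarrow> red (cancel x z)"
  by (cases z) (auto dest: red_tl)

lemma red_F: "red z \<Longrightarrow> red (F xs z)"
  by (induction xs) (auto intro: red_cancel)

lemma red_reduce: "red (reduce xs)"
  by (simp add: reduce_F red_F)

lemma cancel_inv: "red z \<Longrightarrow> cancel (flip x) (cancel x z) = z"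
proof (cases z)
  case Nil then show ?thesis by (simp add: flip_def)
next
  case (Cons y ys)
  assume r: "red z"
  show ?thesis
  proof (cases "fst x = fst y \<and> snd x \<noteq> snd y")
    case True
    then show ?thesis using r Cons by (cases ys) (auto simp: flip_def prod_eq_iff)
  next
    case False
    then show ?thesis using Cons by (auto simp: flip_def)
  qed
qed

lemma flip_flip[simp]: "flip (flip x) = x"
  by (simp add: flip_def)

lemma wneg_cons: "wneg (x # w) = wneg w @ [flip x]"
  by (cases x) (simp add: wneg_def flip_def)

lemma wneg_Nil[simp]: "wneg [] = []" by (simp add: wneg_def)

lemma wneg_wneg[simp]: "wneg (wneg w) = w"
  by (induction w) (auto simp: wneg_def)

lemma F_inv1: "red z \<Longrightarrow> F (wneg w) (F w z) = z"
proof (induction w arbitrary: z)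
  case Nil then show ?case by simp
next
  case (Cons x w)
  have "F (wneg (x # w)) (F (x # w) z) = F (wneg w) (cancel (flip x) (cancel x (F w z)))"
    by (simp add: wneg_cons)
  also have "\<dots> = F (wneg w) (F w z)" using Cons.prems by (simp add: cancel_inv red_F)
  also have "\<dots> = z" using Cons by simp
  finally show ?case .
qed

lemma F_inv2: "red z \<Longrightarrow> F w (F (wneg w) z) = z"
  using F_inv1[of z "wneg w"] by simp

lemma F_reduce: "red z \<Longrightarrow> F xs z = F (reduce xs) z"
proof (induction xs)
  case Nil then show ?case by simp
next
  case (Cons x xs)
  note IH = Cons
  show ?case
  proof (cases "reduce xs")
    case Nil then show ?thesis using IH by (simp add: reduce_cons del: reduce.simps(2))
  next
    case (Cons y ys)
    note Cons2 = Cons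
    show ?thesis
    proof (cases "fst x = fst y \<and> snd x \<noteq> snd y")
      case True
      then have "x = flip y" by (auto simp: flip_def prod_eq_iff)
      then show ?thesis using IH Cons2 True
        by (simp add: reduce_cons cancel_inv red_F del: reduce.simps(2))
    next
      case False
      then show ?thesis using IH Cons2 by (simp add: reduce_cons del: reduce.simps(2)) (metis cancel.simps(2))
    qed
  qed
qed

lemma F_wneg_reduce: "red z \<Longrightarrow> F (wneg a) z = F (wneg (reduce a)) z"
proof -
  assume r: "red z"
  let ?u = "F (wneg a) z"
  have ru: "red ?u" using r by (simp add: red_F)
  have "F (reduce a) ?u = z" using F_inv2[OF r, of a] F_reduce[OF ru, of a] by simp
  then have "F (wneg (reduce a)) z = F (wneg (reduce a)) (F (reduce a) ?u)" by simp
  also have "\<dots> = ?u" using F_inv1[OF ru] by simp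
  finally show ?thesis by simp
qed

lemma reduce_red: "red w \<Longrightarrow> reduce w = w"
proof (induction w)
  case Nil then show ?case by simp
next
  case (Cons x w)
  then show ?case by (cases w) (auto simp: reduce_cons dest: red_tl)
qed

lemma red_append:
  "red (xs @ ys) \<longleftrightarrow> red xs \<and> red ys \<and>
     (xs \<noteq> [] \<and> ys \<noteq> [] \<longrightarrow> \<not> (fst (last xs) = fst (hd ys) \<and> snd (last xs) \<noteq> snd (hd ys)))"
proof (induction xs rule: red.induct)
  case 1 then show ?case by simp
next
  case (2 x) then show ?case by (cases ys) auto
next
  case (3 x y ys') then show ?case by auto
qed

lemma red_rev: "red (rev xs) = red xs"
proof (induction xs rule: red.induct)
  case (3 x y ys) then show ?case by (auto simp: red_append)
qed auto

lemma red_map_flip: "red (map flip xs) = red xs"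
  by (induction xs rule: red.induct) (auto simp: flip_def)

lemma red_wneg: "red (wneg xs) = red xs"
proof -
  have "wneg xs = rev (map flip xs)" unfolding wneg_def flip_def
    by (simp add: case_prod_beta)
  then show ?thesis by (simp add: red_rev red_map_flip)
qed

lemma set_cancel: "set (cancel x z) \<subseteq> insert x (set z)"
  by (cases z) auto

lemma set_F: "set (F xs z) \<subseteq> set xs \<union> set z"
  by (induction xs) (use set_cancel in fastforce)+

lemma set_reduce: "set (reduce xs) \<subseteq> set xs"
  using set_F[of xs "[]"] by (simp add: reduce_F)

lemma fst_wneg: "fst ` set (wneg w) = fst ` set w"
  by (induction w) (auto simp: wneg_cons flip_def)

lemma wneg_empty: "(wneg w = []) = (w = [])"
  by (simp add: wneg_def)

lemma red_join:
  assumes "red a" "red b" "fst ` set a \<inter> fst ` set b = {}"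
  shows "red (a @ b)"
proof -
  have "fst (last a) \<noteq> fst (hd b)" if "a \<noteq> []" "b \<noteq> []"
  proof -
    have "fst (last a) \<in> fst ` set a" "fst (hd b) \<in> fst ` set b" using that by auto
    then show ?thesis using assms(3) by (metis IntI empty_iff)
  qed
  then show ?thesis using assms by (simp add: red_append)
qed

lemma key:
  assumes A: "fst ` set a \<subseteq> A" and B: "fst ` set b \<subseteq> B" and D: "A \<inter> B = {}"
  shows "(reduce (a @ b) = []) = (reduce a = [] \<and> reduce b = [])"
    and "(reduce (a @ b @ wneg a @ wneg b) = []) = (reduce a = [] \<or> reduce b = [])"
proof -
  define ra where "ra = reduce a"
  define rb where "rb = reduce b"
  have rra: "red ra" "red rb" by (simp_all add: ra_def rb_def red_reduce)
  have sa: "fst ` set ra \<subseteq> A" using A set_reduce[of a] unfolding ra_def by blast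
  have sb: "fst ` set rb \<subseteq> B" using B set_reduce[of b] unfolding rb_def by blast
  have rnil: "red []" by simp
  have "reduce (a @ b) = F a rb" by (simp add: reduce_append rb_def)
  also have "\<dots> = F ra rb" using F_reduce[OF rra(2)] ra_def by simp
  also have "\<dots> = reduce (ra @ rb)" by (simp add: reduce_append reduce_red rra)
  also have "\<dots> = ra @ rb" using red_join[OF rra] sa sb D by (intro reduce_red) blast
  finally show "(reduce (a @ b) = []) = (reduce a = [] \<and> reduce b = [])"
    by (simp add: ra_def rb_def)
  have rw: "red (wneg rb)" using rra by (simp add: red_wneg)
  have e1: "reduce (wneg b) = wneg rb"
    using F_wneg_reduce[OF rnil, of b] reduce_red[OF rw] by (simp add: reduce_F[symmetric] rb_def)
  have "reduce (a @ b @ wneg a @ wneg b) = F a (F b (F (wneg a) (wneg rb)))"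
    by (simp add: reduce_append e1)
  also have "\<dots> = F a (F b (F (wneg ra) (wneg rb)))"
    using F_wneg_reduce[OF rw, of a] ra_def by simp
  also have "\<dots> = F a (F rb (F (wneg ra) (wneg rb)))"
    using F_reduce[OF red_F[OF rw], of b "wneg ra"] rb_def by simp
  also have "\<dots> = F ra (F rb (F (wneg ra) (wneg rb)))"
    using F_reduce[OF red_F[OF red_F[OF rw]], of a rb "wneg ra"] ra_def by simp
  also have "\<dots> = reduce (ra @ rb @ wneg ra @ wneg rb)"
    by (simp add: reduce_append reduce_red red_wneg rra)
  finally have eq: "reduce (a @ b @ wneg a @ wneg b) = reduce (ra @ rb @ wneg ra @ wneg rb)" .
  show "(reduce (a @ b @ wneg a @ wneg b) = []) = (reduce a = [] \<or> reduce b = [])"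
  proof (cases "ra = [] \<or> rb = []")
    case True
    then show ?thesis
    proof
      assume h: "ra = []"
      have "reduce (rb @ wneg rb) = []" using F_inv2[OF rnil, of rb] by (simp add: reduce_F)
      then have "reduce (a @ b @ wneg a @ wneg b) = []" using eq h by simp
      then show ?thesis using h ra_def by simp
    next
      assume h: "rb = []"
      have "reduce (ra @ wneg ra) = []" using F_inv2[OF rnil, of ra] by (simp add: reduce_F)
      then have "reduce (a @ b @ wneg a @ wneg b) = []" using eq h by simp
      then show ?thesis using h rb_def by simp
    qed
  next
    case False
    have d: "fst ` set ra \<inter> fst ` set rb = {}" using sa sb D by blast
    have ne: "ra \<noteq> []" "rb \<noteq> []" "wneg ra \<noteq> []" using False by (auto simp: wneg_empty)
    have r1: "red (wneg ra @ wneg rb)"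
      using red_join[of "wneg ra" "wneg rb"] rra d by (simp add: red_wneg fst_wneg)
    have h1: "fst (hd (wneg ra)) \<in> A" using ne sa fst_wneg[of ra] hd_in_set[OF ne(3)] by blast
    have l1: "fst (last rb) \<in> B" using ne sb last_in_set[OF ne(2)] by blast
    have r2: "red (rb @ wneg ra @ wneg rb)"
      using r1 rra h1 l1 ne D by (simp add: red_append) (metis IntI empty_iff)
    have h2: "fst (hd rb) \<in> B" using ne sb hd_in_set[OF ne(2)] by blast
    have l2: "fst (last ra) \<in> A" using ne sa last_in_set[OF ne(1)] by blast
    have "red (ra @ rb @ wneg ra @ wneg rb)"
      using r2 rra h2 l2 ne D by (simp add: red_append) (metis IntI empty_iff)
    then have "reduce (ra @ rb @ wneg ra @ wneg rb) = ra @ rb @ wneg ra @ wneg rb"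
      by (rule reduce_red)
    then show ?thesis using eq False by (simp add: ra_def rb_def)
  qed
qed

lemma remove_on:
  assumes "word_on V h" shows "remove_nails S h = remove_nails (S \<inter> V) h"
  using assms unfolding word_on_def remove_nails_def
  by (intro filter_cong) auto

lemma remove_wneg: "remove_nails S (wneg h) = wneg (remove_nails S h)"
  by (induction h) (auto simp: remove_nails_def wneg_def)

lemma fst_remove: "fst ` set (remove_nails S h) \<subseteq> fst ` set h"
  by (auto simp: remove_nails_def)

theorem lemma1:
  fixes V1 V2 :: "'a set" and h1 h2 :: "'a word" and f1 f2 :: "'a set \<Rightarrow> outcome"
  assumes "finite V1" and "finite V2" and "V1 \<inter> V2 = {}"
    and "is_spec V1 f1" and "is_spec V2 f2"
    and "word_on V1 h1" and "word_on V2 h2"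
    and "solves V1 h1 f1" and "solves V2 h2 f2"
  shows "solves (V1 \<union> V2) (wplus h1 h2)
           (spec_meet (spec_extend V1 f1) (spec_extend V2 f2))
       \<and> solves (V1 \<union> V2) (commutator h1 h2)
           (spec_join (spec_extend V1 f1) (spec_extend V2 f2))"
proof -
  have main: "(is_zero (remove_nails S (wplus h1 h2)) \<longleftrightarrow>
        spec_meet (spec_extend V1 f1) (spec_extend V2 f2) S = Fall) \<and>
      (is_zero (remove_nails S (commutator h1 h2)) \<longleftrightarrow>
        spec_join (spec_extend V1 f1) (spec_extend V2 f2) S = Fall)" for S
  proof -
    let ?a = "remove_nails S h1" and ?b = "remove_nails S h2"
    have A: "fst ` set ?a \<subseteq> V1" using fst_remove[of S h1] assms(6) by (auto simp: word_on_def)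
    have B: "fst ` set ?b \<subseteq> V2" using fst_remove[of S h2] assms(7) by (auto simp: word_on_def)
    have z1: "is_zero ?a \<longleftrightarrow> f1 (S \<inter> V1) = Fall"
      using assms(8) remove_on[OF assms(6), of S] unfolding solves_def by auto
    have z2: "is_zero ?b \<longleftrightarrow> f2 (S \<inter> V2) = Fall"
      using assms(9) remove_on[OF assms(7), of S] unfolding solves_def by auto
    have p: "remove_nails S (wplus h1 h2) = ?a @ ?b"
      by (simp add: remove_nails_def wplus_def)
    have c: "remove_nails S (commutator h1 h2) = ?a @ ?b @ wneg ?a @ wneg ?b"
      by (simp add: commutator_def wplus_def remove_wneg[symmetric]) (simp add: remove_nails_def)
    show ?thesis
      using key[OF A B assms(3)] z1 z2 p c
      by (auto simp: is_zero_def spec_meet_def spec_join_def spec_extend_def)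
  qed
  show ?thesis using main unfolding solves_def by blast
qed

end
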